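(* For every integer $\Delta \geq 2$ there is a connected graph $G$ with $\Delta(G) = \Delta$ such that $c_V(G) = 2(\Delta-1)$ and $c_E(G) = \Delta$.
   Context: $\Delta(G)$ is the maximum degree. In all games the players alternate turns, cops first; initially the cop player places all cops, then the robber player places the robber on a vertex (several pieces may share a position). In a turn each piece of the moving player may stay or make one move (no obligation to move). The robber always sits on vertices and moves to an adjacent vertex; $v_r$ denotes his current vertex. Vertex version: cops on vertices moving to adjacent vertices; cops win when every neighbor of $v_r$ is occupied by a cop; $c_V(G)$ is the least number of cops that can force a win in finitely many turns. Edge version: cops sit on edges; a cop on edge $e$ may move to any edge sharing an endpoint with $e$; cops win when every edge incident to $v_r$ is occupied; the corresponding number is $c_E(G)$. *)

theory Defs
  imports Main
begin

definition simple_graph :: "nat set \<Rightarrow> nat set set \<Rightarrow> bool" where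
  "simple_graph V Es \<longleftrightarrow> finite V \<and> (\<forall>e\<in>Es. e \<subseteq> V \<and> card e = 2)"

definition adj :: "nat set set \<Rightarrow> nat \<Rightarrow> nat \<Rightarrow> bool" where
  "adj Es u v \<longleftrightarrow> {u, v} \<in> Es"

definition connected_graph :: "nat set \<Rightarrow> nat set set \<Rightarrow> bool" where
  "connected_graph V Es \<longleftrightarrow> simple_graph V Es \<and> V \<noteq> {} \<and>
     (\<forall>u\<in>V. \<forall>v\<in>V. (u, v) \<in> {(x, y). adj Es x y}\<^sup>*)"

definition degree :: "nat set set \<Rightarrow> nat \<Rightarrow> nat" where
  "degree Es v = card {e \<in> Es. v \<in> e}"

definition max_degree :: "nat set \<Rightarrow> nat set set \<Rightarrow> nat" where
  "max_degree V Es = Max (degree Es ` V)"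

definition v_surrounded :: "nat set set \<Rightarrow> nat list \<Rightarrow> nat \<Rightarrow> bool" where
  "v_surrounded Es C r \<longleftrightarrow> (\<forall>u. adj Es r u \<longrightarrow> u \<in> set C)"

definition v_cop_move :: "nat set set \<Rightarrow> nat list \<Rightarrow> nat list \<Rightarrow> bool" where
  "v_cop_move Es C C' \<longleftrightarrow> list_all2 (\<lambda>c c'. c' = c \<or> adj Es c c') C C'"

(* v_cwin Es C r: robber (at r) is to move, cops at C; cops can force a win
   in finitely many turns *)
inductive v_cwin :: "nat set set \<Rightarrow> nat list \<Rightarrow> nat \<Rightarrow> bool" for Es where
  won: "v_surrounded Es C r \<Longrightarrow> v_cwin Es C r"
| step: "(\<forall>r'. (r' = r \<or> adj Es r r') \<longrightarrow> (\<exists>C'. v_cop_move Es C C' \<and> v_cwin Es C' r'))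
         \<Longrightarrow> v_cwin Es C r"

(* k cops: cops place, robber places, then cops move first *)
definition v_cops_win :: "nat set \<Rightarrow> nat set set \<Rightarrow> nat \<Rightarrow> bool" where
  "v_cops_win V Es k \<longleftrightarrow> (\<exists>C. length C = k \<and> set C \<subseteq> V \<and>
     (\<forall>r\<in>V. \<exists>C'. v_cop_move Es C C' \<and> v_cwin Es C' r))"

definition c_V :: "nat set \<Rightarrow> nat set set \<Rightarrow> nat" where
  "c_V V Es = (LEAST k. v_cops_win V Es k)"

definition e_surrounded :: "nat set set \<Rightarrow> nat set list \<Rightarrow> nat \<Rightarrow> bool" where
  "e_surrounded Es C r \<longleftrightarrow> (\<forall>e\<in>Es. r \<in> e \<longrightarrow> e \<in> set C)"

definition e_cop_move :: "nat set set \<Rightarrow> nat set list \<Rightarrow> nat set list \<Rightarrow> bool" where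
  "e_cop_move Es C C' \<longleftrightarrow> list_all2 (\<lambda>e e'. e' = e \<or> (e' \<in> Es \<and> e \<inter> e' \<noteq> {})) C C'"

inductive e_cwin :: "nat set set \<Rightarrow> nat set list \<Rightarrow> nat \<Rightarrow> bool" for Es where
  won: "e_surrounded Es C r \<Longrightarrow> e_cwin Es C r"
| step: "(\<forall>r'. (r' = r \<or> adj Es r r') \<longrightarrow> (\<exists>C'. e_cop_move Es C C' \<and> e_cwin Es C' r'))
         \<Longrightarrow> e_cwin Es C r"

definition e_cops_win :: "nat set \<Rightarrow> nat set set \<Rightarrow> nat \<Rightarrow> bool" where
  "e_cops_win V Es k \<longleftrightarrow> (\<exists>C. length C = k \<and> set C \<subseteq> Es \<and>
     (\<forall>r\<in>V. \<exists>C'. e_cop_move Es C C' \<and> e_cwin Es C' r))"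

definition c_E :: "nat set \<Rightarrow> nat set set \<Rightarrow> nat" where
  "c_E V Es = (LEAST k. e_cops_win V Es k)"

end

theory Submission
  imports Defs
begin

definition Lu :: "nat \<Rightarrow> nat set" where "Lu D = {2..D}"
definition Lv :: "nat \<Rightarrow> nat set" where "Lv D = {D+1..<2*D}"
definition GE :: "nat \<Rightarrow> nat set set" where
  "GE D = insert {0,1} ((\<lambda>i. {0,i}) ` Lu D \<union> (\<lambda>i. {1,i}) ` Lv D)"
definition GV :: "nat \<Rightarrow> nat set" where "GV D = {0..<2*D}"

lemma adj_GE:
  assumes "D \<ge> 2"
  shows "adj (GE D) x y \<longleftrightarrow> (x=0 \<and> y=1) \<or> (x=1 \<and> y=0) \<or> (x=0 \<and> y \<in> Lu D) \<or> (y=0 \<and> x \<in> Lu D)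
     \<or> (x=1 \<and> y \<in> Lv D) \<or> (y=1 \<and> x \<in> Lv D)"
proof -
  have "adj (GE D) x y \<longleftrightarrow> {x,y} = {0,1} \<or> (\<exists>i\<in>Lu D. {x,y} = {0,i}) \<or> (\<exists>i\<in>Lv D. {x,y} = {1,i})"
    by (simp only: adj_def GE_def insert_iff Un_iff image_iff)
  also have "\<dots> \<longleftrightarrow> (x=0 \<and> y=1) \<or> (x=1 \<and> y=0) \<or> (x=0 \<and> y \<in> Lu D) \<or> (y=0 \<and> x \<in> Lu D)
     \<or> (x=1 \<and> y \<in> Lv D) \<or> (y=1 \<and> x \<in> Lv D)"
    unfolding doubleton_eq_iff by auto
  finally show ?thesis .
qed

lemma GV_split: "GV D = {0,1} \<union> Lu D \<union> Lv D" if "D \<ge> 2"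
  using that unfolding GV_def Lu_def Lv_def by auto

lemma card_Lu: "card (Lu D) = D - 1" unfolding Lu_def by simp
lemma card_Lv: "card (Lv D) = D - 1" unfolding Lv_def by simp

lemma edges_at_0:
  assumes "D \<ge> 2"
  shows "{e \<in> GE D. 0 \<in> e} = insert {0,1} ((\<lambda>i. {0,i}) ` Lu D)"
  using assms unfolding GE_def Lu_def Lv_def by auto

lemma edges_at_1:
  assumes "D \<ge> 2"
  shows "{e \<in> GE D. 1 \<in> e} = insert {0,1} ((\<lambda>i. {1,i}) ` Lv D)"
  using assms unfolding GE_def Lu_def Lv_def by auto

lemma edges_at_Lu:
  assumes "D \<ge> 2" "l \<in> Lu D"
  shows "{e \<in> GE D. l \<in> e} = {{0,l}}"
  using assms unfolding GE_def Lu_def Lv_def by (auto simp: doubleton_eq_iff)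

lemma edges_at_Lv:
  assumes "D \<ge> 2" "l \<in> Lv D"
  shows "{e \<in> GE D. l \<in> e} = {{1,l}}"
  using assms unfolding GE_def Lu_def Lv_def by (auto simp: doubleton_eq_iff)

lemma card_edges_0:
  assumes "D \<ge> 2"
  shows "card {e \<in> GE D. 0 \<in> e} = D"
proof -
  have inj: "inj_on (\<lambda>i. {0::nat,i}) (Lu D)" unfolding inj_on_def Lu_def doubleton_eq_iff by auto
  have nin: "{0,1} \<notin> (\<lambda>i. {0::nat,i}) ` Lu D" unfolding Lu_def image_iff doubleton_eq_iff by auto
  have fin: "finite (Lu D)" unfolding Lu_def by simp
  have "card (insert {0,1} ((\<lambda>i. {0::nat,i}) ` Lu D)) = Suc (card ((\<lambda>i. {0::nat,i}) ` Lu D))"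
    by (rule card_insert_disjoint[OF finite_imageI[OF fin] nin])
  also have "\<dots> = Suc (D - 1)" using card_image[OF inj] card_Lu[of D] by simp
  finally have c: "card (insert {0,1} ((\<lambda>i. {0::nat,i}) ` Lu D)) = Suc (D - 1)" .
  show ?thesis unfolding edges_at_0[OF assms] c using assms by simp
qed

lemma card_edges_1:
  assumes "D \<ge> 2"
  shows "card {e \<in> GE D. 1 \<in> e} = D"
proof -
  have inj: "inj_on (\<lambda>i. {1::nat,i}) (Lv D)" unfolding inj_on_def Lv_def doubleton_eq_iff by auto
  have nin: "{0,1} \<notin> (\<lambda>i. {1::nat,i}) ` Lv D" unfolding Lv_def image_iff doubleton_eq_iff by auto
  have fin: "finite (Lv D)" unfolding Lv_def by simp
  have "card (insert {0,1} ((\<lambda>i. {1::nat,i}) ` Lv D)) = Suc (card ((\<lambda>i. {1::nat,i}) ` Lv D))"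
    by (rule card_insert_disjoint[OF finite_imageI[OF fin] nin])
  also have "\<dots> = Suc (D - 1)" using card_image[OF inj] card_Lv[of D] by simp
  finally have c: "card (insert {0,1} ((\<lambda>i. {1::nat,i}) ` Lv D)) = Suc (D - 1)" .
  show ?thesis unfolding edges_at_1[OF assms] c using assms by simp
qed

lemma maxdeg: assumes "D \<ge> 2" shows "max_degree (GV D) (GE D) = D"
  unfolding max_degree_def
proof (rule Max_eqI)
  show "finite (degree (GE D) ` GV D)" unfolding GV_def by simp
  show "D \<in> degree (GE D) ` GV D"
  proof (rule image_eqI[where x=0])
    show "D = degree (GE D) 0" using card_edges_0[OF assms] unfolding degree_def by simp
    show "0 \<in> GV D" using assms unfolding GV_def by simp
  qed
  fix y assume "y \<in> degree (GE D) ` GV D"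
  then obtain v where v: "v \<in> GV D" "y = degree (GE D) v" by auto
  then show "y \<le> D" using assms GV_split[OF assms] card_edges_0[OF assms] card_edges_1[OF assms]
      edges_at_Lu[OF assms] edges_at_Lv[OF assms] unfolding degree_def by auto
qed

lemma conn: assumes "D \<ge> 2" shows "connected_graph (GV D) (GE D)"
proof -
  let ?R = "{(x, y). adj (GE D) x y}"
  have sym: "(x,y) \<in> ?R \<Longrightarrow> (y,x) \<in> ?R" for x y unfolding adj_def by (simp add: insert_commute)
  have r10: "(1,0) \<in> ?R" using adj_GE[OF assms] by simp
  have to0: "(v,0) \<in> ?R\<^sup>*" if "v \<in> GV D" for v
  proof -
    have "v \<in> {0,1} \<union> Lu D \<union> Lv D" using that GV_split[OF assms] by simp
    then consider "v = 0" | "v = 1" | "v \<in> Lu D" | "v \<in> Lv D" by blast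
    then show ?thesis
    proof cases
      case 1 then show ?thesis by simp
    next
      case 2 then show ?thesis using r10 by (simp add: r_into_rtrancl)
    next
      case 3 then have "(v,0) \<in> ?R" using adj_GE[OF assms] by simp
      then show ?thesis by (rule r_into_rtrancl)
    next
      case 4 then have "(v,1) \<in> ?R" using adj_GE[OF assms] by simp
      then show ?thesis using r10 by (rule converse_rtrancl_into_rtrancl[OF _ r_into_rtrancl])
    qed
  qed
  have "(u,v) \<in> ?R\<^sup>*" if "u \<in> GV D" "v \<in> GV D" for u v
  proof -
    have "(v,0) \<in> ?R\<^sup>*" using to0 that by simp
    then have "(0,v) \<in> ?R\<^sup>*"
    proof (induction rule: rtrancl_induct)
      case base then show ?case by simp
    next
      case (step y z) then show ?case using sym by (meson converse_rtrancl_into_rtrancl)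
    qed
    then show ?thesis using to0[OF that(1)] by (meson rtrancl_trans)
  qed
  moreover have "simple_graph (GV D) (GE D)"
  proof -
    have "e \<subseteq> GV D \<and> card e = 2" if e: "e \<in> GE D" for e
    proof -
      from e consider "e = {0,1}" | i where "i \<in> Lu D" "e = {0,i}" | i where "i \<in> Lv D" "e = {1,i}"
        unfolding GE_def by blast
      then show ?thesis
      proof cases
        case 1 then show ?thesis using assms unfolding GV_def by auto
      next
        case 2 then show ?thesis using assms unfolding GV_def Lu_def by auto
      next
        case 3 then show ?thesis using assms unfolding GV_def Lv_def by auto
      qed
    qed
    moreover have "finite (GV D)" unfolding GV_def by simp
    ultimately show ?thesis unfolding simple_graph_def by blast
  qed
  moreover have "GV D \<noteq> {}" unfolding GV_def using assms by auto
  ultimately show ?thesis unfolding connected_graph_def by blast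
qed


lemma count_u:
  assumes D: "D \<ge> 2" and mv: "v_cop_move (GE D) C C'" and sub: "Lu D \<subseteq> set C'"
  shows "Lu D \<subseteq> (\<lambda>i. C'!i) ` {i. i < length C \<and> C!i \<in> insert 0 (Lu D)}"
proof
  fix l assume l: "l \<in> Lu D"
  have len: "length C' = length C" using mv unfolding v_cop_move_def by (simp add: list_all2_lengthD)
  have "l \<in> set C'" using sub l by blast
  then obtain i where i: "i < length C'" "C'!i = l" by (auto simp: in_set_conv_nth)
  have "C'!i = C!i \<or> adj (GE D) (C!i) (C'!i)" using mv i(1) len unfolding v_cop_move_def
    by (simp add: list_all2_conv_all_nth)
  moreover have ln: "l \<noteq> 0" "l \<noteq> 1" "l \<notin> Lu D \<inter> Lv D" using l D unfolding Lu_def Lv_def by auto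
  ultimately have "C!i \<in> insert 0 (Lu D)" using i l adj_GE[OF D, of "C!i" l] by auto
  then show "l \<in> (\<lambda>i. C'!i) ` {i. i < length C \<and> C!i \<in> insert 0 (Lu D)}"
    using i len by (intro image_eqI[where x=i]) auto
qed

lemma count_v:
  assumes D: "D \<ge> 2" and mv: "v_cop_move (GE D) C C'" and sub: "Lv D \<subseteq> set C'"
  shows "Lv D \<subseteq> (\<lambda>i. C'!i) ` {i. i < length C \<and> C!i \<in> insert 1 (Lv D)}"
proof
  fix l assume l: "l \<in> Lv D"
  have len: "length C' = length C" using mv unfolding v_cop_move_def by (simp add: list_all2_lengthD)
  have "l \<in> set C'" using sub l by blast
  then obtain i where i: "i < length C'" "C'!i = l" by (auto simp: in_set_conv_nth)
  have "C'!i = C!i \<or> adj (GE D) (C!i) (C'!i)" using mv i(1) len unfolding v_cop_move_def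
    by (simp add: list_all2_conv_all_nth)
  moreover have ln: "l \<noteq> 0" "l \<noteq> 1" "l \<notin> Lu D \<inter> Lv D" using l D unfolding Lu_def Lv_def by auto
  ultimately have "C!i \<in> insert 1 (Lv D)" using i l adj_GE[OF D, of "C!i" l] by auto
  then show "l \<in> (\<lambda>i. C'!i) ` {i. i < length C \<and> C!i \<in> insert 1 (Lv D)}"
    using i len by (intro image_eqI[where x=i]) auto
qed

lemma not_both:
  assumes D: "D \<ge> 2" and len: "length C < 2*(D-1)"
    and m0: "v_cop_move (GE D) C C0" "v_surrounded (GE D) C0 0"
    and m1: "v_cop_move (GE D) C C1" "v_surrounded (GE D) C1 1"
  shows False
proof -
  define Iu where "Iu = {i. i < length C \<and> C!i \<in> insert 0 (Lu D)}"
  define Iv where "Iv = {i. i < length C \<and> C!i \<in> insert 1 (Lv D)}"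
  have s0: "Lu D \<subseteq> set C0" using m0(2) adj_GE[OF D] unfolding v_surrounded_def by auto
  have s1: "Lv D \<subseteq> set C1" using m1(2) adj_GE[OF D] unfolding v_surrounded_def by auto
  have fu: "finite Iu" "finite Iv" unfolding Iu_def Iv_def by auto
  have "D - 1 \<le> card ((\<lambda>i. C0!i) ` Iu)"
    using count_u[OF D m0(1) s0] card_Lu[of D] fu unfolding Iu_def
    by (metis card_mono finite_imageI)
  also have "\<dots> \<le> card Iu" by (rule card_image_le[OF fu(1)])
  finally have cu: "D - 1 \<le> card Iu" .
  have "D - 1 \<le> card ((\<lambda>i. C1!i) ` Iv)"
    using count_v[OF D m1(1) s1] card_Lv[of D] fu unfolding Iv_def
    by (metis card_mono finite_imageI)
  also have "\<dots> \<le> card Iv" by (rule card_image_le[OF fu(2)])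
  finally have cv: "D - 1 \<le> card Iv" .
  have disj: "Iu \<inter> Iv = {}" using D unfolding Iu_def Iv_def Lu_def Lv_def by auto
  have "card (Iu \<union> Iv) = card Iu + card Iv" using disj fu by (simp add: card_Un_disjoint)
  moreover have "card (Iu \<union> Iv) \<le> card {..<length C}"
    by (rule card_mono) (auto simp: Iu_def Iv_def)
  ultimately show False using cu cv len by simp
qed

lemma robber:
  assumes "v_cwin (GE D) C r"
  shows "D \<ge> 2 \<Longrightarrow> r \<in> {0,1} \<Longrightarrow> length C < 2*(D-1) \<Longrightarrow> \<not> v_surrounded (GE D) C r \<Longrightarrow> False"
  using assms
proof (induction rule: v_cwin.induct)
  case (won C r)
  then show ?case by simp
next
  case (step r C)
  have D: "D \<ge> 2" using step by simp
  obtain r' where r': "r' \<in> {0,1}" "\<not> (\<exists>C'. v_cop_move (GE D) C C' \<and> v_surrounded (GE D) C' r')"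
    using not_both[OF D step.prems(3)] by blast
  have "r' = r \<or> adj (GE D) r r'" using r'(1) step.prems(2) adj_GE[OF D] by auto
  then obtain C' where C': "v_cop_move (GE D) C C'" "v_cwin (GE D) C' r'"
    "D \<ge> 2 \<Longrightarrow> r' \<in> {0,1} \<Longrightarrow> length C' < 2*(D-1) \<Longrightarrow> \<not> v_surrounded (GE D) C' r' \<Longrightarrow> False"
    using step.IH by blast
  have l: "length C' = length C" using C'(1) unfolding v_cop_move_def by (simp add: list_all2_lengthD)
  have ns: "\<not> v_surrounded (GE D) C' r'" using C'(1) r'(2) by blast
  show False using C'(3)[OF D r'(1) _ ns] l step.prems(3) by simp
qed

lemma edge_lower:
  assumes "e_cwin (GE D) C r"
  shows "D \<ge> 2 \<Longrightarrow> r = 0 \<Longrightarrow> length C < D \<Longrightarrow> False"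
  using assms
proof (induction rule: e_cwin.induct)
  case (won C r)
  then have "{e \<in> GE D. 0 \<in> e} \<subseteq> set C" unfolding e_surrounded_def by auto
  then have "card {e \<in> GE D. 0 \<in> e} \<le> card (set C)" by (simp add: card_mono)
  also have "\<dots> \<le> length C" by (rule card_length)
  finally show False using won card_edges_0[of D] by simp
next
  case (step r C)
  then obtain C' where C': "e_cop_move (GE D) C C'" "D \<ge> 2 \<Longrightarrow> r = 0 \<Longrightarrow> length C' < D \<Longrightarrow> False"
    by blast
  have "length C' = length C" using C'(1) unfolding e_cop_move_def by (simp add: list_all2_lengthD)
  then show False using C' step.prems by simp
qed


lemma vmove_refl: "v_cop_move Es C C" unfolding v_cop_move_def by (simp add: list_all2_conv_all_nth)

lemma cops_v_win:
  assumes D: "D \<ge> 2"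
  shows "v_cops_win (GV D) (GE D) (2*(D-1))"
proof -
  define C0 where "C0 = replicate (D-1) (0::nat) @ replicate (D-1) 1"
  have in0: "0 \<in> set C0" and in1: "1 \<in> set C0" using D unfolding C0_def by auto
  have "\<exists>C'. v_cop_move (GE D) C0 C' \<and> v_cwin (GE D) C' r" if r: "r \<in> GV D" for r
  proof -
    have "r \<in> {0,1} \<union> Lu D \<union> Lv D" using r GV_split[OF D] by simp
    then consider "r = 0" | "r = 1" | "r \<in> Lu D" | "r \<in> Lv D" by blast
    then show ?thesis
    proof cases
      case 1
      define C' where "C' = [2..<D+1] @ replicate (D-1) (1::nat)"
      have "v_cop_move (GE D) C0 C'" unfolding v_cop_move_def C0_def C'_def
        by (rule list_all2_appendI) (auto simp del: upt_Suc simp: list_all2_conv_all_nth adj_GE[OF D] Lu_def)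
      moreover have "v_surrounded (GE D) C' r" using 1 D unfolding v_surrounded_def C'_def
        by (auto simp del: upt_Suc simp: adj_GE[OF D] Lu_def)
      ultimately show ?thesis by (blast intro: v_cwin.won)
    next
      case 2
      define C' where "C' = replicate (D-1) (0::nat) @ [D+1..<2*D]"
      have "v_cop_move (GE D) C0 C'" unfolding v_cop_move_def C0_def C'_def
        by (rule list_all2_appendI) (auto simp: list_all2_conv_all_nth adj_GE[OF D] Lv_def)
      moreover have "v_surrounded (GE D) C' r" using 2 D unfolding v_surrounded_def C'_def
        by (auto simp: adj_GE[OF D] Lv_def)
      ultimately show ?thesis by (blast intro: v_cwin.won)
    next
      case 3
      have "v_surrounded (GE D) C0 r" using 3 in0 in1 D unfolding v_surrounded_def
        by (auto simp: adj_GE[OF D] Lu_def Lv_def)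
      then show ?thesis using vmove_refl by (blast intro: v_cwin.won)
    next
      case 4
      have "v_surrounded (GE D) C0 r" using 4 in0 in1 D unfolding v_surrounded_def
        by (auto simp: adj_GE[OF D] Lu_def Lv_def)
      then show ?thesis using vmove_refl by (blast intro: v_cwin.won)
    qed
  qed
  moreover have "length C0 = 2*(D-1)" unfolding C0_def by simp
  moreover have "set C0 \<subseteq> GV D" using D unfolding C0_def GV_def by auto
  ultimately show ?thesis unfolding v_cops_win_def by blast
qed

lemma emv: "e' \<in> Es \<Longrightarrow> x \<in> e \<Longrightarrow> x \<in> e' \<Longrightarrow> e' = e \<or> (e' \<in> Es \<and> e \<inter> e' \<noteq> {})"
  by blast

lemma la2_rep_map: "(\<forall>x\<in>set xs. P a (f x)) \<Longrightarrow> list_all2 P (replicate (length xs) a) (map f xs)"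
  by (induction xs) auto

lemma la2_rep_refl: "P a a \<Longrightarrow> list_all2 P (replicate n a) (replicate n a)"
  by (induction n) auto

lemma GE_Lu: "i \<in> Lu D \<Longrightarrow> {0,i} \<in> GE D" unfolding GE_def by blast
lemma GE_Lv: "i \<in> Lv D \<Longrightarrow> {1,i} \<in> GE D" unfolding GE_def by blast

lemma surr_from: "{e \<in> Es. r \<in> e} \<subseteq> set C \<Longrightarrow> e_surrounded Es C r"
  unfolding e_surrounded_def by blast

lemma cops_e_win:
  assumes D: "D \<ge> 2"
  shows "e_cops_win (GV D) (GE D) D"
proof -
  define C0 where "C0 = replicate D ({0,1}::nat set)"
  have C0': "C0 = {0,1} # replicate (D-1) {0,1}" using D unfolding C0_def
    by (cases D) auto
  have e01: "{0,1} \<in> GE D" unfolding GE_def by simp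
  define P where "P = (\<lambda>e e'. e' = e \<or> (e' \<in> GE D \<and> e \<inter> e' \<noteq> ({}::nat set)))"
  have mvP: "e_cop_move (GE D) C0 C' \<longleftrightarrow> list_all2 P C0 C'" for C' unfolding e_cop_move_def P_def by simp
  have Prefl: "P a a" for a unfolding P_def by simp
  have rest: "list_all2 P (replicate (D-1) {0,1}) (replicate (D-1) {0,1})" by (rule la2_rep_refl) (rule Prefl)
  have "\<exists>C'. e_cop_move (GE D) C0 C' \<and> e_cwin (GE D) C' r" if r: "r \<in> GV D" for r
  proof -
    have "r \<in> {0,1} \<union> Lu D \<union> Lv D" using r GV_split[OF D] by simp
    then consider "r = 0" | "r = 1" | "r \<in> Lu D" | "r \<in> Lv D" by blast
    then show ?thesis
    proof cases
      case 1
      define C' where "C' = {0,1} # map (\<lambda>i. {0::nat,i}) [2..<D+1]"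
      have "\<forall>x\<in>set [2..<D+1]. P {0,1} {0,x}" unfolding P_def
      proof
        fix x assume "x \<in> set [2..<D+1]"
        then have "x \<in> Lu D" unfolding Lu_def by auto
        then show "{0, x} = {0, 1} \<or> {0, x} \<in> GE D \<and> {0, 1} \<inter> {0, x} \<noteq> {}"
          by (intro emv[where x=0] GE_Lu) auto
      qed
      then have "list_all2 P (replicate (length [2..<D+1]) {0,1}) (map (\<lambda>i. {0::nat,i}) [2..<D+1])"
        by (rule la2_rep_map)
      moreover have "length [2..<D+1] = D - 1" using D by simp
      ultimately have "list_all2 P C0 C'" unfolding C0' C'_def using Prefl by (simp del: upt_Suc)
      then have "e_cop_move (GE D) C0 C'" using mvP by simp
      moreover have "e_surrounded (GE D) C' r"
      proof (rule surr_from)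
        have "set C' = insert {0,1} ((\<lambda>i. {0,i}) ` Lu D)" unfolding C'_def Lu_def
          by (simp del: upt_Suc add: atLeastLessThanSuc_atLeastAtMost)
        then show "{e \<in> GE D. r \<in> e} \<subseteq> set C'" unfolding 1 edges_at_0[OF D] by simp
      qed
      ultimately show ?thesis by (blast intro: e_cwin.won)
    next
      case 2
      define C' where "C' = {0,1} # map (\<lambda>i. {1::nat,i}) [D+1..<2*D]"
      have "\<forall>x\<in>set [D+1..<2*D]. P {0,1} {1,x}" unfolding P_def
      proof
        fix x assume "x \<in> set [D+1..<2*D]"
        then have "x \<in> Lv D" unfolding Lv_def by auto
        then show "{1, x} = {0, 1} \<or> {1, x} \<in> GE D \<and> {0, 1} \<inter> {1, x} \<noteq> {}"
          by (intro emv[where x=1] GE_Lv) auto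
      qed
      then have "list_all2 P (replicate (length [D+1..<2*D]) {0,1}) (map (\<lambda>i. {1::nat,i}) [D+1..<2*D])"
        by (rule la2_rep_map)
      moreover have "length [D+1..<2*D] = D - 1" by simp
      ultimately have "list_all2 P C0 C'" unfolding C0' C'_def using Prefl by simp
      then have "e_cop_move (GE D) C0 C'" using mvP by simp
      moreover have "e_surrounded (GE D) C' r"
      proof (rule surr_from)
        have "set C' = insert {0,1} ((\<lambda>i. {1,i}) ` Lv D)" unfolding C'_def Lv_def by simp
        then show "{e \<in> GE D. r \<in> e} \<subseteq> set C'" unfolding 2 edges_at_1[OF D] by simp
      qed
      ultimately show ?thesis by (blast intro: e_cwin.won)
    next
      case 3
      define C' where "C' = {0,r} # replicate (D-1) {0::nat,1}"
      have "P {0,1} {0,r}" unfolding P_def by (intro emv[where x=0] GE_Lu 3) auto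
      then have "list_all2 P C0 C'" unfolding C0' C'_def using rest by simp
      then have "e_cop_move (GE D) C0 C'" using mvP by simp
      moreover have "e_surrounded (GE D) C' r"
        by (rule surr_from) (simp add: edges_at_Lu[OF D 3] C'_def)
      ultimately show ?thesis by (blast intro: e_cwin.won)
    next
      case 4
      define C' where "C' = {1,r} # replicate (D-1) {0::nat,1}"
      have "P {0,1} {1,r}" unfolding P_def by (intro emv[where x=1] GE_Lv 4) auto
      then have "list_all2 P C0 C'" unfolding C0' C'_def using rest by simp
      then have "e_cop_move (GE D) C0 C'" using mvP by simp
      moreover have "e_surrounded (GE D) C' r"
        by (rule surr_from) (simp add: edges_at_Lv[OF D 4] C'_def)
      ultimately show ?thesis by (blast intro: e_cwin.won)
    qed
  qed
  moreover have "length C0 = D" unfolding C0_def by simp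
  moreover have "set C0 \<subseteq> GE D" using e01 unfolding C0_def by auto
  ultimately show ?thesis unfolding e_cops_win_def by blast
qed

lemma v_lower:
  assumes D: "D \<ge> 2" and w: "v_cops_win (GV D) (GE D) k"
  shows "2*(D-1) \<le> k"
proof (rule ccontr)
  assume "\<not> 2*(D-1) \<le> k"
  then have k: "k < 2*(D-1)" by simp
  obtain C where C: "length C = k" "\<forall>r\<in>GV D. \<exists>C'. v_cop_move (GE D) C C' \<and> v_cwin (GE D) C' r"
    using w unfolding v_cops_win_def by blast
  obtain r where r: "r \<in> {0,1}" "\<not> (\<exists>C'. v_cop_move (GE D) C C' \<and> v_surrounded (GE D) C' r)"
    using not_both[OF D, of C] C(1) k by blast
  have "r \<in> GV D" using r(1) D unfolding GV_def by auto
  then obtain C' where C': "v_cop_move (GE D) C C'" "v_cwin (GE D) C' r" using C(2) by blast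
  have "length C' = k" using C'(1) C(1) unfolding v_cop_move_def by (simp add: list_all2_lengthD)
  then show False using robber[OF C'(2) D r(1)] k C' r(2) by blast
qed

lemma e_lower:
  assumes D: "D \<ge> 2" and w: "e_cops_win (GV D) (GE D) k"
  shows "D \<le> k"
proof (rule ccontr)
  assume "\<not> D \<le> k"
  then have k: "k < D" by simp
  obtain C where C: "length C = k" "\<forall>r\<in>GV D. \<exists>C'. e_cop_move (GE D) C C' \<and> e_cwin (GE D) C' r"
    using w unfolding e_cops_win_def by blast
  have "0 \<in> GV D" using D unfolding GV_def by auto
  then obtain C' where C': "e_cop_move (GE D) C C'" "e_cwin (GE D) C' 0" using C(2) by blast
  have "length C' = k" using C'(1) C(1) unfolding e_cop_move_def by (simp add: list_all2_lengthD)
  then show False using edge_lower[OF C'(2) D] k by simp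
qed

theorem corollary2:
  fixes \<Delta> :: nat
  assumes "\<Delta> \<ge> 2"
  shows "\<exists>(V :: nat set) (Es :: nat set set).
           connected_graph V Es \<and> max_degree V Es = \<Delta> \<and>
           c_V V Es = 2 * (\<Delta> - 1) \<and> c_E V Es = \<Delta>"
proof (intro exI conjI)
  show "connected_graph (GV \<Delta>) (GE \<Delta>)" by (rule conn[OF assms])
  show "max_degree (GV \<Delta>) (GE \<Delta>) = \<Delta>" by (rule maxdeg[OF assms])
  show "c_V (GV \<Delta>) (GE \<Delta>) = 2 * (\<Delta> - 1)" unfolding c_V_def
    by (rule Least_equality) (use cops_v_win[OF assms] v_lower[OF assms] in auto)
  show "c_E (GV \<Delta>) (GE \<Delta>) = \<Delta>" unfolding c_E_def
    by (rule Least_equality) (use cops_e_win[OF assms] e_lower[OF assms] in auto)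
qed


end
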